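(* Let $i_1,\dots,i_m\in\mathcal{C}l_{0,m}$ with $i_k^2=-1$ for all $k$, let $0\le\mu\le m$, $F_1=\{i_1,\dots,i_\mu\}$, $F_2=\{i_{\mu+1},\dots,i_m\}$, and let $\mathcal{F}_{F_1,F_2}$ be the geometric Fourier transform defined in the context. Then for all $j_1,\dots,j_m\in\mathbb{N}$, \[ \mathcal{F}_{F_1,F_2}(\psi_{j_1,\dots,j_m})=\left(\prod_{k=1}^{\mu}(-i_k)^{j_k}\right)\psi_{j_1,\dots,j_m}\left(\prod_{k=\mu+1}^{m}(-i_k)^{j_k}\right), \] so the basis $\{\psi_{j_1,\dots,j_m}\}$ of $\mathcal{S}(\mathbb{R}^m)\otimes\mathcal{C}l_{0,m}$ diagonalizes $\mathcal{F}_{F_1,F_2}$.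
   Context: $\mathcal{C}l_{0,m}$ is the real associative algebra generated by $e_1,\dots,e_m$ with $e_ie_j+e_je_i=0$ ($i\ne j$), $e_i^2=-1$. For $f:\mathbb{R}^m\to\mathcal{C}l_{0,m}$, $\mathcal{F}_{F_1,F_2}(f)(u)=(2\pi)^{-m/2}\int_{\mathbb{R}^m}\left(\prod_{k=1}^{\mu}e^{-i_kx_ku_k}\right)f(x)\left(\prod_{k=\mu+1}^{m}e^{-i_kx_ku_k}\right)dx$, products taken in increasing order of $k$. The one-dimensional Hermite functions are $\psi_k(x)=(x-\frac{d}{dx})^ke^{-x^2/2}=H_k(x)e^{-x^2/2}$, and $\psi_{j_1,\dots,j_m}(x)=\psi_{j_1}(x_1)\cdots\psi_{j_m}(x_m)$. *)

theory Defs
  imports "HOL-Analysis.Analysis"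
begin

text \<open>An element of Cl_{0,m} is represented by its coordinates with respect to the
basis blades e_A = e_{a_1} ... e_{a_k} (a_1 < ... < a_k), A a subset of {1..m}.\<close>

type_synonym clif = "nat set \<Rightarrow> real"

definition cl :: "nat \<Rightarrow> clif set" where
  "cl m = {x. \<forall>A. x A \<noteq> 0 \<longrightarrow> A \<subseteq> {1..m}}"

text \<open>Sign of e_A e_B = sign A B * e_{A symmetric-difference B}, using
e_i e_j = - e_j e_i (i ~= j) and e_i^2 = -1.\<close>
definition blade_sign :: "nat set \<Rightarrow> nat set \<Rightarrow> real" where
  "blade_sign A B = (-1) ^ (card {(a, b). a \<in> A \<and> b \<in> B \<and> b < a} + card (A \<inter> B))"

definition clmul :: "nat \<Rightarrow> clif \<Rightarrow> clif \<Rightarrow> clif" where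
  "clmul m x y = (\<lambda>C. \<Sum>A\<in>Pow {1..m}. \<Sum>B\<in>Pow {1..m}.
      if (A - B) \<union> (B - A) = C then blade_sign A B * x A * y B else 0)"

definition cl_one :: clif where
  "cl_one = (\<lambda>A. if A = {} then 1 else 0)"

definition cl_scalar :: "real \<Rightarrow> clif" where
  "cl_scalar r = (\<lambda>A. if A = {} then r else 0)"

definition cl_neg :: "clif \<Rightarrow> clif" where
  "cl_neg x = (\<lambda>A. - x A)"

fun cl_pow :: "nat \<Rightarrow> clif \<Rightarrow> nat \<Rightarrow> clif" where
  "cl_pow m a 0 = cl_one"
| "cl_pow m a (Suc n) = clmul m a (cl_pow m a n)"

definition cl_exp :: "nat \<Rightarrow> clif \<Rightarrow> clif" where
  "cl_exp m a = (\<lambda>C. \<Sum>n. cl_pow m a n C / fact n)"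

definition cl_prod :: "nat \<Rightarrow> (nat \<Rightarrow> clif) \<Rightarrow> nat list \<Rightarrow> clif" where
  "cl_prod m g ks = foldr (\<lambda>k acc. clmul m (g k) acc) ks cl_one"

text \<open>Points of R^m are functions x :: nat => real, coordinates x 1, ..., x m;
Lebesgue measure on R^m is the product measure of lborel over {1..m}.\<close>

definition lebesgue_m :: "nat \<Rightarrow> (nat \<Rightarrow> real) measure" where
  "lebesgue_m m = PiM {1..m} (\<lambda>_. lborel)"

definition cl_integral :: "nat \<Rightarrow> ((nat \<Rightarrow> real) \<Rightarrow> clif) \<Rightarrow> clif" where
  "cl_integral m F = (\<lambda>C. integral\<^sup>L (lebesgue_m m) (\<lambda>x. F x C))"

definition geom_FT ::
  "nat \<Rightarrow> nat \<Rightarrow> (nat \<Rightarrow> clif) \<Rightarrow> ((nat \<Rightarrow> real) \<Rightarrow> clif) \<Rightarrow> (nat \<Rightarrow> real) \<Rightarrow> clif" where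
  "geom_FT m \<mu> i f u =
     (\<lambda>C. (2 * pi) powr (- real m / 2) *
       cl_integral m (\<lambda>x.
         clmul m (cl_prod m (\<lambda>k. cl_exp m (clmul m (cl_scalar (- x k * u k)) (i k))) [1..<\<mu>+1])
           (clmul m (f x)
             (cl_prod m (\<lambda>k. cl_exp m (clmul m (cl_scalar (- x k * u k)) (i k))) [\<mu>+1..<m+1]))) C)"

definition hermite_fun :: "nat \<Rightarrow> real \<Rightarrow> real" where
  "hermite_fun k = ((\<lambda>g x. x * g x - deriv g x) ^^ k) (\<lambda>x. exp (- x\<^sup>2 / 2))"

definition hermite_multi :: "nat \<Rightarrow> (nat \<Rightarrow> nat) \<Rightarrow> (nat \<Rightarrow> real) \<Rightarrow> real" where
  "hermite_multi m j x = (\<Prod>k\<in>{1..m}. hermite_fun (j k) (x k))"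

end

theory Submission imports Defs "HOL-Probability.Probability" "HOL-Computational_Algebra.Polynomial"
begin


fun hp :: "nat \<Rightarrow> real poly" where
  "hp 0 = 1"
| "hp (Suc k) = [:0,2:] * hp k - pderiv (hp k)"
declare hp.simps(2)[simp del]

lemma pderiv_hp_aux: "pderiv ([:0,2:] * p - pderiv p) = smult 2 p + [:0,2::real:] * pderiv p - pderiv (pderiv p)"
  by (simp add: pderiv_mult pderiv_diff pderiv_pCons pderiv_smult)

lemma pderiv_hp: "pderiv (hp (Suc k)) = smult (2 * real (Suc k)) (hp k)"
proof (induction k)
  case 0
  then show ?case by (simp add: pderiv_pCons hp.simps)
next
  case (Suc k)
  have "pderiv (hp (Suc (Suc k))) = smult 2 (hp (Suc k)) + [:0,2:] * pderiv (hp (Suc k)) - pderiv (pderiv (hp (Suc k)))"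
    unfolding hp.simps(2)[of "Suc k"] by (rule pderiv_hp_aux)
  also have "\<dots> = smult 2 (hp (Suc k)) + smult (2 * real (Suc k)) ([:0,2:] * hp k - pderiv (hp k))"
    unfolding Suc pderiv_smult smult_diff_right mult_smult_right by simp
  also have "\<dots> = smult (2 * real (Suc (Suc k))) (hp (Suc k))"
    by (simp only: hp.simps(2)[of k, symmetric] smult_add_left[symmetric]) simp
  finally show ?case .
qed

lemma pderiv_hp': "pderiv (hp j) = smult (2 * real j) (hp (j - 1))"
  by (cases j) (simp_all add: pderiv_hp)

definition gs :: "real \<Rightarrow> real" where "gs x = exp (- x\<^sup>2 / 2)"

lemma deriv_polygs: "((\<lambda>x. poly p x * gs x) has_real_derivative
    (poly (pderiv p) x - x * poly p x) * gs x) (at x)"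
  unfolding gs_def
  by (auto intro!: derivative_eq_intros simp: algebra_simps power2_eq_square)

lemma hermite_fun_eq: "hermite_fun k = (\<lambda>x. poly (hp k) x * gs x)"
proof (induction k)
  case 0
  then show ?case by (simp add: hermite_fun_def gs_def)
next
  case (Suc k)
  have "hermite_fun (Suc k) = (\<lambda>x. x * hermite_fun k x - deriv (hermite_fun k) x)"
    by (simp add: hermite_fun_def)
  also have "\<dots> = (\<lambda>x. poly (hp (Suc k)) x * gs x)"
    unfolding Suc
  proof (rule ext)
    fix x
    show "x * (poly (hp k) x * gs x) - deriv (\<lambda>x. poly (hp k) x * gs x) x = poly (hp (Suc k)) x * gs x"
      unfolding DERIV_imp_deriv[OF deriv_polygs] by (simp add: hp.simps(2) algebra_simps)
  qed
  finally show ?case .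
qed

lemma hp_rec: "poly (hp (Suc j)) x = 2 * x * poly (hp j) x - 2 * real j * poly (hp (j - 1)) x"
proof -
  have "poly (hp (Suc j)) x = poly ([:0,2:] * hp j - pderiv (hp j)) x"
    by (simp only: hp.simps(2))
  also have "\<dots> = 2 * x * poly (hp j) x - poly (smult (2 * real j) (hp (j - 1))) x"
    by (simp only: poly_diff poly_mult pderiv_hp') (simp add: poly_pCons)
  also have "\<dots> = 2 * x * poly (hp j) x - 2 * real j * poly (hp (j - 1)) x"
    by (simp only: poly_smult)
  finally show ?thesis .
qed

lemma mono_decay_top: "((\<lambda>t::real. t ^ i * gs t) \<longlongrightarrow> 0) at_top"
proof (rule Lim_null_comparison[OF _ tendsto_power_div_exp_0[of i]])
  show "\<forall>\<^sub>F t in at_top. norm (t ^ i * gs t) \<le> t ^ i / exp t"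
    using eventually_ge_at_top[of "2::real"]
  proof (rule eventually_mono)
    fix t :: real assume t: "2 \<le> t"
    have "2 * t \<le> t * t" using t by (intro mult_right_mono) auto
    then have "t \<le> t\<^sup>2 / 2" by (simp add: power2_eq_square)
    then have "exp t \<le> exp (t\<^sup>2 / 2)" by simp
    then have "1 / exp (t\<^sup>2 / 2) \<le> 1 / exp t" by (simp add: field_simps)
    then have "t ^ i * (1 / exp (t\<^sup>2 / 2)) \<le> t ^ i * (1 / exp t)"
      using t by (intro mult_left_mono) auto
    moreover have "gs t = 1 / exp (t\<^sup>2 / 2)"
      unfolding gs_def by (simp add: exp_minus inverse_eq_divide)
    moreover have "norm (t ^ i * gs t) = t ^ i * gs t"
      using t by (simp add: gs_def)
    ultimately show "norm (t ^ i * gs t) \<le> t ^ i / exp t"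
      by simp
  qed
qed

lemma mono_decay_bot: "((\<lambda>t::real. t ^ i * gs t) \<longlongrightarrow> 0) at_bot"
proof -
  have "((\<lambda>t::real. (-1) ^ i * (t ^ i * gs t)) \<longlongrightarrow> (-1)^i * 0) at_top"
    by (intro tendsto_mult tendsto_const mono_decay_top)
  then show ?thesis
    unfolding filterlim_at_bot_mirror by (simp add: gs_def power_minus' mult.assoc)
qed

lemma poly_decay: "((\<lambda>t. poly p t * gs t) \<longlongrightarrow> 0) at_top" "((\<lambda>t. poly p t * gs t) \<longlongrightarrow> 0) at_bot"
proof -
  have e: "(\<lambda>t. poly p t * gs t) = (\<lambda>t. \<Sum>i\<le>degree p. coeff p i * (t ^ i * gs t))"
    by (auto simp: poly_altdef sum_distrib_right mult.assoc)
  show "((\<lambda>t. poly p t * gs t) \<longlongrightarrow> 0) at_top" unfolding e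
    using tendsto_sum[of "{..degree p}" "\<lambda>i t. coeff p i * (t ^ i * gs t)" "\<lambda>_. 0"]
    by (simp add: tendsto_mult_right_zero mono_decay_top)
  show "((\<lambda>t. poly p t * gs t) \<longlongrightarrow> 0) at_bot" unfolding e
    using tendsto_sum[of "{..degree p}" "\<lambda>i t. coeff p i * (t ^ i * gs t)" "\<lambda>_. 0"]
    by (simp add: tendsto_mult_right_zero mono_decay_bot)
qed

lemma poly_gs_integrable: "integrable lborel (\<lambda>t. poly p t * gs t)"
proof -
  have e: "(\<lambda>t. poly p t * gs t) = (\<lambda>t. \<Sum>i\<le>degree p. (coeff p i * sqrt (2*pi)) * (std_normal_density t * t ^ i))"
    by (auto simp: poly_altdef sum_distrib_right std_normal_density_def gs_def mult_ac sum_distrib_left)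
  show ?thesis unfolding e
    by (auto intro!: integrable_sum integrable_mult_right integrable_std_normal_moment)
qed

lemma poly_gs_integrable_bnd:
  assumes [measurable]: "f \<in> borel_measurable lborel" and b: "\<And>t. \<bar>f t\<bar> \<le> 1"
  shows "integrable lborel (\<lambda>t. poly p t * gs t * f t)"
proof (rule Bochner_Integration.integrable_bound[OF poly_gs_integrable[of p]])
  show "(\<lambda>t. poly p t * gs t * f t) \<in> borel_measurable lborel"
  proof (rule borel_measurable_times)
    show "(\<lambda>t. poly p t * gs t) \<in> borel_measurable lborel"
    proof -
      have "continuous_on UNIV (\<lambda>t. poly p t * gs t)"
        unfolding gs_def by (intro continuous_at_imp_continuous_on ballI isCont_mult poly_isCont) simp
      then show ?thesis using borel_measurable_continuous_onI by simp
    qed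
  qed (rule assms(1))
  show "AE x in lborel. norm (poly p x * gs x * f x) \<le> norm (poly p x * gs x)"
    using b by (auto simp: abs_mult intro!: mult_left_le)
qed



lemma meas_cont: "continuous_on UNIV f \<Longrightarrow> (f::real\<Rightarrow>'b::{second_countable_topology, topological_space}) \<in> borel_measurable lborel"
  using borel_measurable_continuous_onI by simp

lemma meas_cos: "(\<lambda>t::real. cos (t * u)) \<in> borel_measurable lborel"
  by (intro meas_cont continuous_intros)
lemma meas_sin: "(\<lambda>t::real. sin (t * u)) \<in> borel_measurable lborel"
  by (intro meas_cont continuous_intros)

lemma ftc_zero:
  fixes G g :: "real \<Rightarrow> real"
  assumes d: "\<And>t. (G has_real_derivative g t) (at t)" and c: "\<And>t. isCont g t"
    and i: "integrable lborel g" and l1: "(G \<longlongrightarrow> 0) at_top" and l2: "(G \<longlongrightarrow> 0) at_bot"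
  shows "integral\<^sup>L lborel g = 0"
proof -
  have "(LBINT x=-\<infinity>..\<infinity>. g x) = 0 - 0"
  proof (rule interval_integral_FTC_integrable[where F=G])
    show "set_integrable lborel (einterval (- \<infinity>) \<infinity>) g"
      using i by (simp add: set_integrable_def einterval_def)
    show "((G \<circ> real_of_ereal) \<longlongrightarrow> 0) (at_right (- \<infinity>))"
      using l2 by (simp add: ereal_tendsto_simps1)
    show "((G \<circ> real_of_ereal) \<longlongrightarrow> 0) (at_left \<infinity>)"
      using l1 by (simp add: ereal_tendsto_simps1)
  qed (use d c in \<open>auto simp: has_real_derivative_iff_has_vector_derivative[symmetric]\<close>)
  then show ?thesis
    by (simp add: interval_lebesgue_integral_def einterval_def set_lebesgue_integral_def)
qed

lemma decay_bnd:
  assumes "\<And>t. \<bar>f t\<bar> \<le> 1"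
  shows "((\<lambda>t. poly p t * gs t * f t) \<longlongrightarrow> 0) at_top" "((\<lambda>t. poly p t * gs t * f t) \<longlongrightarrow> 0) at_bot"
proof -
  have b: "\<forall>t. norm (poly p t * gs t * f t) \<le> \<bar>poly p t * gs t\<bar>"
    using assms by (auto simp: abs_mult intro: mult_left_le)
  show "((\<lambda>t. poly p t * gs t * f t) \<longlongrightarrow> 0) at_top"
    by (rule Lim_null_comparison[OF always_eventually[OF b] tendsto_rabs_zero[OF poly_decay(1)]])
  show "((\<lambda>t. poly p t * gs t * f t) \<longlongrightarrow> 0) at_bot"
    by (rule Lim_null_comparison[OF always_eventually[OF b] tendsto_rabs_zero[OF poly_decay(2)]])
qed

definition IC :: "real poly \<Rightarrow> real \<Rightarrow> real" where
  "IC p u = (LINT t|lborel. poly p t * gs t * cos (t * u))"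
definition IS :: "real poly \<Rightarrow> real \<Rightarrow> real" where
  "IS p u = (LINT t|lborel. poly p t * gs t * sin (t * u))"

lemma int_cos: "integrable lborel (\<lambda>t. poly p t * gs t * cos (t * u))"
  by (intro poly_gs_integrable_bnd meas_cos) simp
lemma int_sin: "integrable lborel (\<lambda>t. poly p t * gs t * sin (t * u))"
  by (intro poly_gs_integrable_bnd meas_sin) simp

lemma cont_gs: "isCont gs t"
  unfolding gs_def by (intro continuous_intros) auto

lemma IC_diff: "IC (p - q) u = IC p u - IC q u"
  unfolding IC_def poly_diff left_diff_distrib by (rule Bochner_Integration.integral_diff) (rule int_cos)+
lemma IS_diff: "IS (p - q) u = IS p u - IS q u"
  unfolding IS_def poly_diff left_diff_distrib by (rule Bochner_Integration.integral_diff) (rule int_sin)+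
lemma IC_smult: "IC (smult c p) u = c * IC p u"
  unfolding IC_def by (subst integral_mult_right_zero[symmetric]) (auto simp: algebra_simps)
lemma IS_smult: "IS (smult c p) u = c * IS p u"
  unfolding IS_def by (subst integral_mult_right_zero[symmetric]) (auto simp: algebra_simps)

lemma IBP_cos: "IC (pderiv p - [:0,1:] * p) u = u * IS p u"
proof -
  let ?g = "\<lambda>t. poly (pderiv p - [:0,1:] * p) t * gs t * cos (t * u) - u * (poly p t * gs t * sin (t * u))"
  have "integral\<^sup>L lborel ?g = 0"
  proof (rule ftc_zero[where G="\<lambda>t. poly p t * gs t * cos (t * u)"])
    fix t
    have "((\<lambda>t. (poly p t * gs t) * cos (t * u)) has_real_derivative
       (poly p t * gs t) * (- sin (t * u) * u) + ((poly (pderiv p) t - t * poly p t) * gs t) * cos (t * u)) (at t)"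
      by (rule DERIV_mult'[OF deriv_polygs]) (auto intro!: derivative_eq_intros)
    then show "((\<lambda>t. poly p t * gs t * cos (t * u)) has_real_derivative ?g t) (at t)"
      by (rule DERIV_cong) (simp add: algebra_simps)
    show "isCont ?g t" by (intro continuous_intros poly_isCont cont_gs)
  next
    show "integrable lborel ?g" by (intro Bochner_Integration.integrable_diff integrable_mult_right int_cos int_sin)
    show "((\<lambda>t. poly p t * gs t * cos (t * u)) \<longlongrightarrow> 0) at_top"
      by (rule decay_bnd) simp
    show "((\<lambda>t. poly p t * gs t * cos (t * u)) \<longlongrightarrow> 0) at_bot"
      by (rule decay_bnd) simp
  qed
  moreover have "integral\<^sup>L lborel ?g = IC (pderiv p - [:0,1:] * p) u - u * IS p u"
    unfolding IC_def IS_def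
    by (simp only: Bochner_Integration.integral_diff[OF int_cos integrable_mult_right[OF int_sin]] integral_mult_right_zero)
  ultimately show ?thesis by simp
qed

lemma IBP_sin: "IS (pderiv p - [:0,1:] * p) u = - u * IC p u"
proof -
  let ?g = "\<lambda>t. poly (pderiv p - [:0,1:] * p) t * gs t * sin (t * u) + u * (poly p t * gs t * cos (t * u))"
  have "integral\<^sup>L lborel ?g = 0"
  proof (rule ftc_zero[where G="\<lambda>t. poly p t * gs t * sin (t * u)"])
    fix t
    have "((\<lambda>t. (poly p t * gs t) * sin (t * u)) has_real_derivative
       (poly p t * gs t) * (cos (t * u) * u) + ((poly (pderiv p) t - t * poly p t) * gs t) * sin (t * u)) (at t)"
      by (rule DERIV_mult'[OF deriv_polygs]) (auto intro!: derivative_eq_intros)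
    then show "((\<lambda>t. poly p t * gs t * sin (t * u)) has_real_derivative ?g t) (at t)"
      by (rule DERIV_cong) (simp add: algebra_simps)
    show "isCont ?g t" by (intro continuous_intros poly_isCont cont_gs)
  next
    show "integrable lborel ?g" by (intro Bochner_Integration.integrable_add integrable_mult_right int_sin int_cos)
    show "((\<lambda>t. poly p t * gs t * sin (t * u)) \<longlongrightarrow> 0) at_top"
      by (rule decay_bnd) simp
    show "((\<lambda>t. poly p t * gs t * sin (t * u)) \<longlongrightarrow> 0) at_bot"
      by (rule decay_bnd) simp
  qed
  moreover have "integral\<^sup>L lborel ?g = IS (pderiv p - [:0,1:] * p) u + u * IC p u"
    unfolding IC_def IS_def
    by (simp only: Bochner_Integration.integral_add[OF int_sin integrable_mult_right[OF int_cos]] integral_mult_right_zero)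
  ultimately show ?thesis by simp
qed



lemma cont_snd: "continuous_on UNIV std_normal_density"
  unfolding normal_density_def by (intro continuous_intros) auto

lemma iexp_meas: "(\<lambda>x. std_normal_density x *\<^sub>R iexp (u * x)) \<in> borel_measurable lborel"
  by (intro meas_cont continuous_intros cont_snd)

lemma char_integrable: "integrable lborel (\<lambda>x. std_normal_density x *\<^sub>R iexp (u * x))"
proof (rule Bochner_Integration.integrable_bound[OF _ iexp_meas])
  show "integrable lborel std_normal_density"
    using integrable_std_normal_moment[of 0] by simp
  show "AE x in lborel. norm (std_normal_density x *\<^sub>R iexp (u * x)) \<le> norm (std_normal_density x)"
    by (simp add: norm_exp_i_times)
qed

lemma char_int: "(CLINT x|lborel. std_normal_density x *\<^sub>R iexp (u * x)) = complex_of_real (gs u)"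
proof -
  have "char std_normal_distribution u = complex_of_real (gs u)"
    by (simp add: char_std_normal_distribution gs_def)
  then show ?thesis
    unfolding char_def
    by (subst (asm) integral_density) (auto simp: normal_density_nonneg intro: meas_cont continuous_intros)
qed

lemma IC_1: "IC 1 u = sqrt (2 * pi) * gs u" and IS_1: "IS 1 u = 0"
proof -
  have e1: "Re (CLINT x|lborel. std_normal_density x *\<^sub>R iexp (u * x)) = (LINT x|lborel. std_normal_density x * cos (x * u))"
    by (subst integral_Re[OF char_integrable, symmetric]) (simp add: mult.commute Re_exp Im_exp)
  have e2: "Im (CLINT x|lborel. std_normal_density x *\<^sub>R iexp (u * x)) = (LINT x|lborel. std_normal_density x * sin (x * u))"
    by (subst integral_Im[OF char_integrable, symmetric]) (simp add: mult.commute Re_exp Im_exp)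
  have "IC 1 u = (LINT x|lborel. sqrt (2 * pi) * (std_normal_density x * cos (x * u)))"
    unfolding IC_def by (intro Bochner_Integration.integral_cong) (auto simp: std_normal_density_def gs_def)
  also have "\<dots> = sqrt (2 * pi) * gs u"
    using e1 unfolding char_int by simp
  finally show "IC 1 u = sqrt (2 * pi) * gs u" .
  have "IS 1 u = (LINT x|lborel. sqrt (2 * pi) * (std_normal_density x * sin (x * u)))"
    unfolding IS_def by (intro Bochner_Integration.integral_cong) (auto simp: std_normal_density_def gs_def)
  also have "\<dots> = 0"
    using e2 unfolding char_int by simp
  finally show "IS 1 u = 0" .
qed

lemma hp_rec2: "hp (Suc j) = smult (2 * real j) (hp (j - 1)) - smult 2 (pderiv (hp j) - [:0,1:] * hp j)"
proof -
  have "poly (hp (Suc j)) = poly (smult (2 * real j) (hp (j - 1)) - smult 2 (pderiv (hp j) - [:0,1:] * hp j))"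
    by (rule ext) (simp add: hp_rec pderiv_hp')
  then show ?thesis by (simp add: poly_eq_poly_eq_iff)
qed

lemma herm_FT_aux:
  "(IC (hp j) u = sqrt (2*pi) * Re ((-\<i>)^j) * hermite_fun j u \<and>
    IS (hp j) u = - sqrt (2*pi) * Im ((-\<i>)^j) * hermite_fun j u) \<and>
   (IC (hp (Suc j)) u = sqrt (2*pi) * Re ((-\<i>)^(Suc j)) * hermite_fun (Suc j) u \<and>
    IS (hp (Suc j)) u = - sqrt (2*pi) * Im ((-\<i>)^(Suc j)) * hermite_fun (Suc j) u)"
proof (induction j)
  case 0
  have h1: "hp (Suc 0) = smult (-2) (pderiv (hp 0) - [:0,1:] * hp 0)"
    by (simp add: hp.simps)
  have a: "IC (hp (Suc 0)) u = -2 * (u * IS (hp 0) u)"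
    unfolding h1 IC_smult IBP_cos ..
  have b: "IS (hp (Suc 0)) u = -2 * (- u * IC (hp 0) u)"
    unfolding h1 IS_smult IBP_sin ..
  show ?case
    using IC_1[of u] IS_1[of u] unfolding a b
    by (simp add: hermite_fun_eq hp_rec[of 0])
next
  case (Suc j)
  let ?w = "- \<i> :: complex"
  let ?a = "Re (?w ^ j)" and ?b = "Im (?w ^ j)"
  have w1: "?w ^ Suc j = ?w * ?w ^ j" and w2: "?w ^ Suc (Suc j) = ?w * (?w * ?w ^ j)" by simp_all
  have r1: "Re (?w ^ Suc j) = ?b" "Im (?w ^ Suc j) = - ?a" unfolding w1 by simp_all
  have r2: "Re (?w ^ Suc (Suc j)) = - ?a" "Im (?w ^ Suc (Suc j)) = - ?b" unfolding w2 by simp_all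
  have hr: "hermite_fun (Suc (Suc j)) u = 2 * u * hermite_fun (Suc j) u - 2 * real (Suc j) * hermite_fun j u"
    unfolding hermite_fun_eq hp_rec[of "Suc j" u] by (simp add: algebra_simps)
  have IC2: "IC (hp (Suc (Suc j))) u = 2 * real (Suc j) * IC (hp j) u - 2 * (u * IS (hp (Suc j)) u)"
  proof -
    have "IC (hp (Suc (Suc j))) u = IC (smult (2*real (Suc j)) (hp j)) u - IC (smult 2 (pderiv (hp (Suc j)) - [:0,1:] * hp (Suc j))) u"
      using hp_rec2[of "Suc j"] by (metis IC_diff diff_Suc_1)
    then show ?thesis by (simp only: IC_smult IBP_cos)
  qed
  have IS2: "IS (hp (Suc (Suc j))) u = 2 * real (Suc j) * IS (hp j) u - 2 * (- u * IC (hp (Suc j)) u)"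
  proof -
    have "IS (hp (Suc (Suc j))) u = IS (smult (2*real (Suc j)) (hp j)) u - IS (smult 2 (pderiv (hp (Suc j)) - [:0,1:] * hp (Suc j))) u"
      using hp_rec2[of "Suc j"] by (metis IS_diff diff_Suc_1)
    then show ?thesis by (simp only: IS_smult IBP_sin)
  qed
  show ?case
    using Suc.IH unfolding IC2 IS2 r1 r2 hr
    by (simp add: algebra_simps)
qed

lemma herm_FT:
  "IC (hp j) u = sqrt (2*pi) * Re ((-\<i>)^j) * hermite_fun j u"
  "IS (hp j) u = - sqrt (2*pi) * Im ((-\<i>)^j) * hermite_fun j u"
  using herm_FT_aux[of j u] by auto



definition clK :: "nat \<Rightarrow> nat set \<Rightarrow> nat set \<Rightarrow> nat set \<Rightarrow> real" where
  "clK m C A B = (if (A - B) \<union> (B - A) = C then blade_sign A B else 0)"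

lemma clmul_K: "clmul m x y C = (\<Sum>A\<in>Pow {1..m}. \<Sum>B\<in>Pow {1..m}. clK m C A B * x A * y B)"
  unfolding clmul_def clK_def by (intro sum.cong) auto

lemma clmul_in: "clmul m x y \<in> cl m"
  unfolding cl_def
proof (intro CollectI allI impI)
  fix C assume nz: "clmul m x y C \<noteq> 0"
  show "C \<subseteq> {1..m}"
  proof (rule ccontr)
    assume "\<not> C \<subseteq> {1..m}"
    then have "\<forall>A\<in>Pow {1..m}. \<forall>B\<in>Pow {1..m}. (A - B) \<union> (B - A) \<noteq> C" by auto
    then have "clmul m x y C = 0" unfolding clmul_def by (auto intro!: sum.neutral)
    with nz show False by simp
  qed
qed

lemma cl_one_in: "cl_one \<in> cl m"
  unfolding cl_def cl_one_def by auto

lemma clmul_sum_left: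
  "clmul m (\<lambda>C. \<Sum>s\<in>T. c s * f s C) z = (\<lambda>C. \<Sum>s\<in>T. c s * clmul m (f s) z C)"
proof (rule ext)
  fix C
  have "clmul m (\<lambda>C. \<Sum>s\<in>T. c s * f s C) z C =
     (\<Sum>A\<in>Pow {1..m}. \<Sum>B\<in>Pow {1..m}. \<Sum>s\<in>T. c s * (clK m C A B * f s A * z B))"
    unfolding clmul_K by (simp add: sum_distrib_left sum_distrib_right mult_ac)
  also have "\<dots> = (\<Sum>A\<in>Pow {1..m}. \<Sum>s\<in>T. \<Sum>B\<in>Pow {1..m}. c s * (clK m C A B * f s A * z B))"
    by (intro sum.cong refl sum.swap)
  also have "\<dots> = (\<Sum>s\<in>T. \<Sum>A\<in>Pow {1..m}. \<Sum>B\<in>Pow {1..m}. c s * (clK m C A B * f s A * z B))"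
    by (rule sum.swap)
  also have "\<dots> = (\<Sum>s\<in>T. c s * clmul m (f s) z C)"
    unfolding clmul_K by (simp add: sum_distrib_left)
  finally show "clmul m (\<lambda>C. \<Sum>s\<in>T. c s * f s C) z C = (\<Sum>s\<in>T. c s * clmul m (f s) z C)" .
qed

lemma clmul_sum_right:
  "clmul m z (\<lambda>C. \<Sum>s\<in>T. c s * f s C) = (\<lambda>C. \<Sum>s\<in>T. c s * clmul m z (f s) C)"
proof (rule ext)
  fix C
  have "clmul m z (\<lambda>C. \<Sum>s\<in>T. c s * f s C) C =
     (\<Sum>A\<in>Pow {1..m}. \<Sum>B\<in>Pow {1..m}. \<Sum>s\<in>T. c s * (clK m C A B * z A * f s B))"
    unfolding clmul_K by (simp add: sum_distrib_left sum_distrib_right mult_ac)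
  also have "\<dots> = (\<Sum>A\<in>Pow {1..m}. \<Sum>s\<in>T. \<Sum>B\<in>Pow {1..m}. c s * (clK m C A B * z A * f s B))"
    by (intro sum.cong refl sum.swap)
  also have "\<dots> = (\<Sum>s\<in>T. \<Sum>A\<in>Pow {1..m}. \<Sum>B\<in>Pow {1..m}. c s * (clK m C A B * z A * f s B))"
    by (rule sum.swap)
  also have "\<dots> = (\<Sum>s\<in>T. c s * clmul m z (f s) C)"
    unfolding clmul_K by (simp add: sum_distrib_left)
  finally show "clmul m z (\<lambda>C. \<Sum>s\<in>T. c s * f s C) C = (\<Sum>s\<in>T. c s * clmul m z (f s) C)" .
qed

lemma clmul_scal_left: "clmul m (\<lambda>C. a * x C) z = (\<lambda>C. a * clmul m x z C)"
  using clmul_sum_left[of m "\<lambda>_. a" "\<lambda>_. x" "{()}" z] by simp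
lemma clmul_scal_right: "clmul m z (\<lambda>C. a * x C) = (\<lambda>C. a * clmul m z x C)"
  using clmul_sum_right[of m z "\<lambda>_. a" "\<lambda>_. x" "{()}"] by simp
lemma clmul_two_left: "clmul m (\<lambda>C. a * x C + b * y C) z = (\<lambda>C. a * clmul m x z C + b * clmul m y z C)"
  using clmul_sum_left[of m "\<lambda>s. if s then a else b" "\<lambda>s. if s then x else y" UNIV z]
  by (simp add: UNIV_bool add.commute)
lemma clmul_two_right: "clmul m z (\<lambda>C. a * x C + b * y C) = (\<lambda>C. a * clmul m z x C + b * clmul m z y C)"
  using clmul_sum_right[of m z "\<lambda>s. if s then a else b" "\<lambda>s. if s then x else y" UNIV]
  by (simp add: UNIV_bool add.commute)

lemma clmul_one_left: "x \<in> cl m \<Longrightarrow> clmul m cl_one x = x"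
proof (rule ext)
  fix C assume x: "x \<in> cl m"
  have "clmul m cl_one x C = (\<Sum>B\<in>Pow {1..m}. clK m C {} B * x B)"
    unfolding clmul_K cl_one_def
    by (simp add: if_distrib if_distribR cong: if_cong) (subst sum.swap, simp add: sum.delta)
  also have "\<dots> = (\<Sum>B\<in>Pow {1..m}. if B = C then x B else 0)"
    by (intro sum.cong) (auto simp: clK_def blade_sign_def)
  also have "\<dots> = x C"
    using x by (auto simp: cl_def sum.delta')
  finally show "clmul m cl_one x C = x C" .
qed

lemma clmul_one_right: "x \<in> cl m \<Longrightarrow> clmul m x cl_one = x"
proof (rule ext)
  fix C assume x: "x \<in> cl m"
  have "clmul m x cl_one C = (\<Sum>A\<in>Pow {1..m}. clK m C A {} * x A)"
    unfolding clmul_K cl_one_def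
    by (simp add: if_distrib if_distribR sum.delta' cong: if_cong)
  also have "\<dots> = (\<Sum>A\<in>Pow {1..m}. if A = C then x A else 0)"
    by (intro sum.cong) (auto simp: clK_def blade_sign_def)
  also have "\<dots> = x C"
    using x by (auto simp: cl_def sum.delta')
  finally show "clmul m x cl_one C = x C" .
qed

lemma cl_scalar_eq: "cl_scalar r = (\<lambda>C. r * cl_one C)"
  by (auto simp: cl_scalar_def cl_one_def)

lemma clmul_scalar_left: "x \<in> cl m \<Longrightarrow> clmul m (cl_scalar r) x = (\<lambda>C. r * x C)"
  by (simp add: cl_scalar_eq clmul_scal_left clmul_one_left)



lemma cl_pow_i:
  assumes ic: "a \<in> cl m" and sq: "clmul m a a = cl_neg cl_one"
  shows "cl_pow m (\<lambda>C. t * a C) n = (\<lambda>C. Re ((\<i> * complex_of_real t) ^ n) * cl_one C + Im ((\<i> * complex_of_real t) ^ n) * a C)"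
proof (induction n)
  case 0
  then show ?case by simp
next
  case (Suc n)
  let ?z = "(\<i> * complex_of_real t) ^ n"
  have "cl_pow m (\<lambda>C. t * a C) (Suc n) = clmul m (\<lambda>C. t * a C) (\<lambda>C. Re ?z * cl_one C + Im ?z * a C)"
    using Suc by simp
  also have "\<dots> = (\<lambda>C. Re ?z * (t * clmul m a cl_one C) + Im ?z * (t * clmul m a a C))"
    by (simp add: clmul_two_right clmul_scal_left)
  also have "\<dots> = (\<lambda>C. Re ((\<i> * complex_of_real t) ^ Suc n) * cl_one C + Im ((\<i> * complex_of_real t) ^ Suc n) * a C)"
    using ic by (auto simp: clmul_one_right sq cl_neg_def algebra_simps)
  finally show ?case .
qed

lemma cl_exp_i:
  assumes ic: "a \<in> cl m" and sq: "clmul m a a = cl_neg cl_one"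
  shows "cl_exp m (\<lambda>C. t * a C) = (\<lambda>C. cos t * cl_one C + sin t * a C)"
proof (rule ext)
  fix C
  have s: "(\<lambda>n. (\<i> * complex_of_real t) ^ n /\<^sub>R fact n) sums exp (\<i> * complex_of_real t)"
    by (rule exp_converges)
  have sr: "(\<lambda>n. Re ((\<i> * complex_of_real t) ^ n) / fact n) sums cos t"
  proof -
    have h1: "\<And>w::complex. \<And>c::real. Re (w /\<^sub>R c) = Re w / c" by (simp add: divide_inverse mult.commute)
    have h2: "Re (exp (\<i> * complex_of_real t)) = cos t" by (simp add: Re_exp)
    show ?thesis using sums_Re[OF s] unfolding h1 h2 .
  qed
  have si: "(\<lambda>n. Im ((\<i> * complex_of_real t) ^ n) / fact n) sums sin t"
  proof -
    have h1: "\<And>w::complex. \<And>c::real. Im (w /\<^sub>R c) = Im w / c" by (simp add: divide_inverse mult.commute)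
    have h2: "Im (exp (\<i> * complex_of_real t)) = sin t" by (simp add: Im_exp)
    show ?thesis using sums_Im[OF s] unfolding h1 h2 .
  qed
  have "(\<lambda>n. cl_pow m (\<lambda>C. t * a C) n C / fact n) sums (cos t * cl_one C + sin t * a C)"
    unfolding cl_pow_i[OF ic sq]
    using sums_add[OF sums_mult2[OF sr, of "cl_one C"] sums_mult2[OF si, of "a C"]]
    by (simp add: add_divide_distrib)
  then show "cl_exp m (\<lambda>C. t * a C) C = cos t * cl_one C + sin t * a C"
    unfolding cl_exp_def by (rule sums_unique[symmetric])
qed

lemma foldr_in: "foldr (\<lambda>k acc. clmul m (g k) acc) ks cl_one \<in> cl m"
  by (cases ks) (auto simp: clmul_in cl_one_in)

definition ES :: "(nat \<Rightarrow> clif) \<Rightarrow> nat set \<Rightarrow> nat \<Rightarrow> clif" where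
  "ES i S k = (if k \<in> S then i k else cl_one)"

definition GF :: "nat \<Rightarrow> (nat \<Rightarrow> clif) \<Rightarrow> nat set \<Rightarrow> nat list \<Rightarrow> clif" where
  "GF m i S ks = foldr (\<lambda>k acc. clmul m (ES i S k) acc) ks cl_one"

definition WW :: "(nat \<Rightarrow> real) \<Rightarrow> (nat \<Rightarrow> real) \<Rightarrow> nat set \<Rightarrow> nat set \<Rightarrow> real" where
  "WW \<alpha> \<beta> J S = (\<Prod>k\<in>J. if k \<in> S then \<beta> k else \<alpha> k)"

lemma GF_cong: "k \<notin> set ks \<Longrightarrow> GF m i (insert k S) ks = GF m i S ks"
  unfolding GF_def by (intro foldr_cong) (auto simp: ES_def)

lemma sum_Pow_insert:
  assumes "finite K" "k \<notin> K"
  shows "(\<Sum>S\<in>Pow (insert k K). f S) = (\<Sum>S\<in>Pow K. f S) + (\<Sum>S\<in>Pow K. f (insert k S))"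
proof -
  have "(\<Sum>S\<in>Pow (insert k K). f S) = (\<Sum>S\<in>Pow K. f S) + (\<Sum>S\<in>insert k ` Pow K. f S)"
    unfolding Pow_insert using assms by (intro sum.union_disjoint) auto
  also have "(\<Sum>S\<in>insert k ` Pow K. f S) = (\<Sum>S\<in>Pow K. f (insert k S))"
    using assms by (subst sum.reindex) (auto simp: inj_on_def)
  finally show ?thesis .
qed

lemma expand:
  assumes "distinct ks" and ic: "\<And>k. k \<in> set ks \<Longrightarrow> i k \<in> cl m"
  shows "foldr (\<lambda>k acc. clmul m (\<lambda>C. \<alpha> k * cl_one C + \<beta> k * i k C) acc) ks cl_one =
    (\<lambda>C. \<Sum>S\<in>Pow (set ks). WW \<alpha> \<beta> (set ks) S * GF m i S ks C)"
  using assms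
proof (induction ks)
  case Nil
  then show ?case by (simp add: WW_def GF_def)
next
  case (Cons k ks)
  let ?F = "foldr (\<lambda>k acc. clmul m (\<lambda>C. \<alpha> k * cl_one C + \<beta> k * i k C) acc) ks cl_one"
  have kn: "k \<notin> set ks" and d: "distinct ks" using Cons by auto
  have IH: "?F = (\<lambda>C. \<Sum>S\<in>Pow (set ks). WW \<alpha> \<beta> (set ks) S * GF m i S ks C)"
    using Cons by auto
  have Fin: "?F \<in> cl m" by (rule foldr_in)
  have "foldr (\<lambda>k acc. clmul m (\<lambda>C. \<alpha> k * cl_one C + \<beta> k * i k C) acc) (k # ks) cl_one
     = (\<lambda>C. \<alpha> k * ?F C + \<beta> k * clmul m (i k) ?F C)"
    using Fin by (simp add: clmul_two_left clmul_one_left)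
  also have "\<dots> = (\<lambda>C. \<alpha> k * (\<Sum>S\<in>Pow (set ks). WW \<alpha> \<beta> (set ks) S * GF m i S ks C)
        + \<beta> k * (\<Sum>S\<in>Pow (set ks). WW \<alpha> \<beta> (set ks) S * clmul m (i k) (GF m i S ks) C))"
    by (subst (2) IH, subst IH) (simp add: clmul_sum_right)
  also have "\<dots> = (\<lambda>C. \<Sum>S\<in>Pow (set (k # ks)). WW \<alpha> \<beta> (set (k # ks)) S * GF m i S (k # ks) C)"
  proof (rule ext)
    fix C
    have w1: "WW \<alpha> \<beta> (insert k (set ks)) S = \<alpha> k * WW \<alpha> \<beta> (set ks) S" if "S \<in> Pow (set ks)" for S
      using that kn unfolding WW_def by (subst prod.insert) auto
    have w2: "WW \<alpha> \<beta> (insert k (set ks)) (insert k S) = \<beta> k * WW \<alpha> \<beta> (set ks) S" if "S \<in> Pow (set ks)" for S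
      using that kn unfolding WW_def by (subst prod.insert) (auto intro!: prod.cong)
    have g1: "GF m i S (k # ks) C = GF m i S ks C" if "S \<in> Pow (set ks)" for S
      using that kn foldr_in[of m "ES i S" ks] by (auto simp: GF_def ES_def clmul_one_left)
    have g2: "GF m i (insert k S) (k # ks) C = clmul m (i k) (GF m i S ks) C" for S
      using kn GF_cong[of k ks m i S] by (simp add: GF_def ES_def)
    show "\<alpha> k * (\<Sum>S\<in>Pow (set ks). WW \<alpha> \<beta> (set ks) S * GF m i S ks C)
        + \<beta> k * (\<Sum>S\<in>Pow (set ks). WW \<alpha> \<beta> (set ks) S * clmul m (i k) (GF m i S ks) C)
        = (\<Sum>S\<in>Pow (set (k # ks)). WW \<alpha> \<beta> (set (k # ks)) S * GF m i S (k # ks) C)"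
    proof -
      have "(\<Sum>S\<in>Pow (set (k # ks)). WW \<alpha> \<beta> (set (k # ks)) S * GF m i S (k # ks) C)
        = (\<Sum>S\<in>Pow (set ks). \<alpha> k * (WW \<alpha> \<beta> (set ks) S * GF m i S ks C))
        + (\<Sum>S\<in>Pow (set ks). \<beta> k * (WW \<alpha> \<beta> (set ks) S * clmul m (i k) (GF m i S ks) C))"
        unfolding set_simps sum_Pow_insert[OF finite_set kn]
        by (intro arg_cong2[where f="(+)"] sum.cong refl) (simp_all add: w1 w2 g1 g2)
      then show ?thesis by (simp add: sum_distrib_left)
    qed
  qed
  finally show ?case .
qed



lemma powr_cancel: "(2*pi) powr (- real m / 2) * sqrt (2*pi) ^ m = 1"
proof -
  have a: "(2*pi) powr (- real m / 2) = inverse ((2*pi) powr (real m / 2))"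
    by (simp add: powr_minus[symmetric])
  have "(2*pi) powr (real m / 2) = sqrt ((2*pi) powr real m)" by (rule powr_half_sqrt_powr) simp
  also have "\<dots> = sqrt ((2*pi)^m)" by (subst powr_realpow) auto
  also have "\<dots> = sqrt (2*pi)^m" by (rule real_sqrt_power)
  finally have b: "(2*pi) powr (real m / 2) = sqrt (2*pi) ^ m" .
  show ?thesis unfolding a b by simp
qed

lemma psf: "product_sigma_finite (\<lambda>_::nat. lborel :: real measure)"
  unfolding product_sigma_finite_def by (simp add: lborel.sigma_finite_measure_axioms)

definition hh :: "(nat \<Rightarrow> nat) \<Rightarrow> (nat \<Rightarrow> real) \<Rightarrow> nat set \<Rightarrow> nat \<Rightarrow> real \<Rightarrow> real" where
  "hh j u V k t = poly (hp (j k)) t * gs t * (if k \<in> V then - sin (t * u k) else cos (t * u k))"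

lemma hh_integrable: "integrable lborel (hh j u V k)"
  unfolding hh_def
proof (rule poly_gs_integrable_bnd)
  show "(\<lambda>t. if k \<in> V then - sin (t * u k) else cos (t * u k)) \<in> borel_measurable lborel"
    by (cases "k \<in> V") (simp_all add: meas_sin meas_cos borel_measurable_uminus)
qed auto

lemma hh_integral: "integral\<^sup>L lborel (hh j u V k) =
   sqrt (2*pi) * (if k \<in> V then Im ((-\<i>)^(j k)) else Re ((-\<i>)^(j k))) * hermite_fun (j k) (u k)"
proof (cases "k \<in> V")
  case True
  have "integral\<^sup>L lborel (hh j u V k) = - IS (hp (j k)) (u k)"
  proof -
    have "hh j u V k = (\<lambda>t. - (poly (hp (j k)) t * gs t * sin (t * u k)))"
      using True by (auto simp: hh_def)
    then show ?thesis unfolding IS_def by simp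
  qed
  then show ?thesis using True herm_FT(2)[of "j k" "u k"] by simp
next
  case False
  have "integral\<^sup>L lborel (hh j u V k) = IC (hp (j k)) (u k)"
  proof -
    have "hh j u V k = (\<lambda>t. poly (hp (j k)) t * gs t * cos (t * u k))"
      using False by (auto simp: hh_def)
    then show ?thesis unfolding IC_def by simp
  qed
  then show ?thesis using False herm_FT(1)[of "j k" "u k"] by simp
qed

lemma sandwich:
  assumes dL: "distinct L" and dR: "distinct R"
    and icL: "\<And>k. k \<in> set L \<Longrightarrow> i k \<in> cl m" and icR: "\<And>k. k \<in> set R \<Longrightarrow> i k \<in> cl m"
  shows "clmul m (foldr (\<lambda>k acc. clmul m (\<lambda>C. \<alpha> k * cl_one C + \<beta> k * i k C) acc) L cl_one)
     (clmul m (cl_scalar c) (foldr (\<lambda>k acc. clmul m (\<lambda>C. \<alpha> k * cl_one C + \<beta> k * i k C) acc) R cl_one))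
   = (\<lambda>C. \<Sum>S\<in>Pow (set L). \<Sum>T\<in>Pow (set R).
        (WW \<alpha> \<beta> (set L) S * c * WW \<alpha> \<beta> (set R) T) * clmul m (GF m i S L) (GF m i T R) C)"
proof -
  have eR: "foldr (\<lambda>k acc. clmul m (\<lambda>C. \<alpha> k * cl_one C + \<beta> k * i k C) acc) R cl_one = (\<lambda>C. \<Sum>S\<in>Pow (set R). WW \<alpha> \<beta> (set R) S * GF m i S R C)"
    by (rule expand[where i=i and m=m and \<alpha>=\<alpha> and \<beta>=\<beta>, OF dR icR])
  have eL: "foldr (\<lambda>k acc. clmul m (\<lambda>C. \<alpha> k * cl_one C + \<beta> k * i k C) acc) L cl_one = (\<lambda>C. \<Sum>S\<in>Pow (set L). WW \<alpha> \<beta> (set L) S * GF m i S L C)"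
    by (rule expand[where i=i and m=m and \<alpha>=\<alpha> and \<beta>=\<beta>, OF dL icL])
  let ?FR = "foldr (\<lambda>k acc. clmul m (\<lambda>C. \<alpha> k * cl_one C + \<beta> k * i k C) acc) R cl_one"
  have "clmul m (cl_scalar c) ?FR = (\<lambda>C. c * ?FR C)"
    by (rule clmul_scalar_left[OF foldr_in])
  also have "\<dots> = (\<lambda>C. \<Sum>T\<in>Pow (set R). (c * WW \<alpha> \<beta> (set R) T) * GF m i T R C)"
    unfolding eR by (rule ext, simp only: sum_distrib_left mult.assoc)
  finally have e: "clmul m (cl_scalar c) ?FR = (\<lambda>C. \<Sum>T\<in>Pow (set R). (c * WW \<alpha> \<beta> (set R) T) * GF m i T R C)" .
  show ?thesis
    unfolding e
    unfolding eL clmul_sum_left clmul_sum_right by (rule ext, simp only: sum_distrib_left mult.assoc)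
qed

lemma prod_split:
  assumes "S \<subseteq> A" "T \<subseteq> B" "A \<inter> B = {}" "finite A" "finite B"
  shows "WW a b A S * WW a b B T = (\<Prod>k\<in>A \<union> B. if k \<in> S \<union> T then b k else a k)"
proof -
  have "WW a b A S = (\<Prod>k\<in>A. if k \<in> S \<union> T then b k else a k)"
    unfolding WW_def using assms by (intro prod.cong) auto
  moreover have "WW a b B T = (\<Prod>k\<in>B. if k \<in> S \<union> T then b k else a k)"
    unfolding WW_def using assms by (intro prod.cong) auto
  ultimately show ?thesis using assms by (simp add: prod.union_disjoint)
qed

lemma coef_lhs:
  "(\<Prod>k\<in>{1..m}. if k \<in> V then sin (- x k * u k) else cos (- x k * u k)) * hermite_multi m j x
   = (\<Prod>k\<in>{1..m}. hh j u V k (x k))"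
  unfolding hermite_multi_def hh_def hermite_fun_eq prod.distrib[symmetric]
  by (intro prod.cong) auto

lemma int_prod:
  "integrable (lebesgue_m m) (\<lambda>x. \<Prod>k\<in>{1..m}. hh j u V k (x k))"
  "integral\<^sup>L (lebesgue_m m) (\<lambda>x. \<Prod>k\<in>{1..m}. hh j u V k (x k)) = (\<Prod>k\<in>{1..m}. integral\<^sup>L lborel (hh j u V k))"
  unfolding lebesgue_m_def
  by (rule product_sigma_finite.product_integrable_prod[OF psf], simp, rule hh_integrable)
     (rule product_sigma_finite.product_integral_prod[OF psf], simp, rule hh_integrable)

lemma val:
  "(2*pi) powr (- real m / 2) * (\<Prod>k\<in>{1..m}. integral\<^sup>L lborel (hh j u V k))
   = (\<Prod>k\<in>{1..m}. if k \<in> V then Im ((-\<i>)^(j k)) else Re ((-\<i>)^(j k))) * hermite_multi m j u"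
proof -
  have "(\<Prod>k\<in>{1..m}. integral\<^sup>L lborel (hh j u V k)) =
     sqrt (2*pi) ^ m * ((\<Prod>k\<in>{1..m}. if k \<in> V then Im ((-\<i>)^(j k)) else Re ((-\<i>)^(j k))) * hermite_multi m j u)"
    unfolding hh_integral hermite_multi_def prod.distrib by simp
  then show ?thesis using powr_cancel[of m] by (simp add: mult.assoc[symmetric])
qed

theorem theorem7:
  fixes m \<mu> :: nat and i :: "nat \<Rightarrow> clif" and j :: "nat \<Rightarrow> nat"
  assumes i_cl: "\<And>k. k \<in> {1..m} \<Longrightarrow> i k \<in> cl m"
    and i_sq: "\<And>k. k \<in> {1..m} \<Longrightarrow> clmul m (i k) (i k) = cl_neg cl_one"
    and mu: "\<mu> \<le> m"
  shows "geom_FT m \<mu> i (\<lambda>x. cl_scalar (hermite_multi m j x)) u =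
    clmul m (cl_prod m (\<lambda>k. cl_pow m (cl_neg (i k)) (j k)) [1..<\<mu>+1])
      (clmul m (cl_scalar (hermite_multi m j u))
        (cl_prod m (\<lambda>k. cl_pow m (cl_neg (i k)) (j k)) [\<mu>+1..<m+1]))"
proof -
  define L where "L = [1..<\<mu>+1]"
  define R where "R = [\<mu>+1..<m+1]"
  have dL: "distinct L" and dR: "distinct R" unfolding L_def R_def by simp_all
  have sL: "set L \<subseteq> {1..m}" and sR: "set R \<subseteq> {1..m}" unfolding L_def R_def using mu by auto
  have icL: "\<And>k. k \<in> set L \<Longrightarrow> i k \<in> cl m" using sL i_cl by auto
  have icR: "\<And>k. k \<in> set R \<Longrightarrow> i k \<in> cl m" using sR i_cl by auto
  have UN: "set L \<union> set R = {1..m}" unfolding L_def R_def using mu by auto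
  have DJ: "set L \<inter> set R = {}" unfolding L_def R_def by auto
  define \<alpha>' where "\<alpha>' k = Re ((-\<i>)^(j k))" for k
  define \<beta>' where "\<beta>' k = Im ((-\<i>)^(j k))" for k
  define M where "M S T = clmul m (GF m i S L) (GF m i T R)" for S T
  have powk: "cl_pow m (cl_neg (i k)) (j k) = (\<lambda>C. \<alpha>' k * cl_one C + \<beta>' k * i k C)"
    if "k \<in> {1..m}" for k
  proof -
    have "cl_neg (i k) = (\<lambda>C. (-1) * i k C)" by (simp add: cl_neg_def)
    then show ?thesis
      using cl_pow_i[OF i_cl[OF that] i_sq[OF that], of "-1" "j k"]
      by (simp add: \<alpha>'_def \<beta>'_def)
  qed
  have cpL: "cl_prod m (\<lambda>k. cl_pow m (cl_neg (i k)) (j k)) L =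
      foldr (\<lambda>k acc. clmul m (\<lambda>C. \<alpha>' k * cl_one C + \<beta>' k * i k C) acc) L cl_one"
    unfolding cl_prod_def using sL by (intro foldr_cong) (auto simp: powk)
  have cpR: "cl_prod m (\<lambda>k. cl_pow m (cl_neg (i k)) (j k)) R =
      foldr (\<lambda>k acc. clmul m (\<lambda>C. \<alpha>' k * cl_one C + \<beta>' k * i k C) acc) R cl_one"
    unfolding cl_prod_def using sR by (intro foldr_cong) (auto simp: powk)
  have RHS: "clmul m (cl_prod m (\<lambda>k. cl_pow m (cl_neg (i k)) (j k)) L)
      (clmul m (cl_scalar (hermite_multi m j u)) (cl_prod m (\<lambda>k. cl_pow m (cl_neg (i k)) (j k)) R))
    = (\<lambda>C. \<Sum>S\<in>Pow (set L). \<Sum>T\<in>Pow (set R).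
        (WW \<alpha>' \<beta>' (set L) S * hermite_multi m j u * WW \<alpha>' \<beta>' (set R) T) * M S T C)"
    unfolding cpL cpR M_def by (rule sandwich[OF dL dR icL icR])
  have Px: "clmul m (cl_prod m (\<lambda>k. cl_exp m (clmul m (cl_scalar (- x k * u k)) (i k))) L)
      (clmul m (cl_scalar (hermite_multi m j x)) (cl_prod m (\<lambda>k. cl_exp m (clmul m (cl_scalar (- x k * u k)) (i k))) R))
    = (\<lambda>C. \<Sum>S\<in>Pow (set L). \<Sum>T\<in>Pow (set R). (\<Prod>k\<in>{1..m}. hh j u (S \<union> T) k (x k)) * M S T C)" for x
  proof -
    define a where "a k = cos (- x k * u k)" for k
    define b where "b k = sin (- x k * u k)" for k
    have ek: "cl_exp m (clmul m (cl_scalar (- x k * u k)) (i k)) = (\<lambda>C. a k * cl_one C + b k * i k C)"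
      if "k \<in> {1..m}" for k
      unfolding clmul_scalar_left[OF i_cl[OF that]] a_def b_def
      by (rule cl_exp_i[OF i_cl[OF that] i_sq[OF that]])
    have c1: "cl_prod m (\<lambda>k. cl_exp m (clmul m (cl_scalar (- x k * u k)) (i k))) L =
      foldr (\<lambda>k acc. clmul m (\<lambda>C. a k * cl_one C + b k * i k C) acc) L cl_one"
      unfolding cl_prod_def using sL by (intro foldr_cong refl, simp only: ek subset_iff)
    have c2: "cl_prod m (\<lambda>k. cl_exp m (clmul m (cl_scalar (- x k * u k)) (i k))) R =
      foldr (\<lambda>k acc. clmul m (\<lambda>C. a k * cl_one C + b k * i k C) acc) R cl_one"
      unfolding cl_prod_def using sR by (intro foldr_cong refl, simp only: ek subset_iff)
    have co: "WW a b (set L) S * hermite_multi m j x * WW a b (set R) T = (\<Prod>k\<in>{1..m}. hh j u (S \<union> T) k (x k))"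
      if "S \<in> Pow (set L)" "T \<in> Pow (set R)" for S T
    proof -
      have "WW a b (set L) S * hermite_multi m j x * WW a b (set R) T
          = (WW a b (set L) S * WW a b (set R) T) * hermite_multi m j x" by (simp add: mult_ac)
      also have "\<dots> = (\<Prod>k\<in>{1..m}. if k \<in> S \<union> T then b k else a k) * hermite_multi m j x"
        using that DJ by (subst prod_split) (auto simp: UN)
      also have "\<dots> = (\<Prod>k\<in>{1..m}. hh j u (S \<union> T) k (x k))"
        unfolding a_def b_def by (rule coef_lhs)
      finally show ?thesis .
    qed
    have sw: "clmul m (foldr (\<lambda>k acc. clmul m (\<lambda>C. a k * cl_one C + b k * i k C) acc) L cl_one)
     (clmul m (cl_scalar (hermite_multi m j x)) (foldr (\<lambda>k acc. clmul m (\<lambda>C. a k * cl_one C + b k * i k C) acc) R cl_one))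
   = (\<lambda>C. \<Sum>S\<in>Pow (set L). \<Sum>T\<in>Pow (set R).
        (WW a b (set L) S * hermite_multi m j x * WW a b (set R) T) * M S T C)"
      unfolding M_def by (rule sandwich[OF dL dR icL icR])
    show ?thesis
      unfolding c1 c2 sw
      by (intro ext sum.cong refl) (simp add: co)
  qed
  have "geom_FT m \<mu> i (\<lambda>x. cl_scalar (hermite_multi m j x)) u =
     (\<lambda>C. (2 * pi) powr (- real m / 2) * integral\<^sup>L (lebesgue_m m)
         (\<lambda>x. \<Sum>S\<in>Pow (set L). \<Sum>T\<in>Pow (set R). (\<Prod>k\<in>{1..m}. hh j u (S \<union> T) k (x k)) * M S T C))"
    unfolding geom_FT_def cl_integral_def L_def[symmetric] R_def[symmetric] Px ..
  also have "\<dots> = (\<lambda>C. \<Sum>S\<in>Pow (set L). \<Sum>T\<in>Pow (set R).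
       ((2 * pi) powr (- real m / 2) * (\<Prod>k\<in>{1..m}. integral\<^sup>L lborel (hh j u (S \<union> T) k))) * M S T C)"
  proof (rule ext)
    fix C
    have "integral\<^sup>L (lebesgue_m m)
         (\<lambda>x. \<Sum>S\<in>Pow (set L). \<Sum>T\<in>Pow (set R). (\<Prod>k\<in>{1..m}. hh j u (S \<union> T) k (x k)) * M S T C)
       = (\<Sum>S\<in>Pow (set L). \<Sum>T\<in>Pow (set R). (\<Prod>k\<in>{1..m}. integral\<^sup>L lborel (hh j u (S \<union> T) k)) * M S T C)"
      apply (subst Bochner_Integration.integral_sum)
       apply (intro Bochner_Integration.integrable_sum Bochner_Integration.integrable_mult_left int_prod)
      apply (intro sum.cong refl)
      apply (subst Bochner_Integration.integral_sum)
       apply (intro Bochner_Integration.integrable_mult_left int_prod)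
      apply (intro sum.cong refl)
      apply (simp only: integral_mult_left_zero int_prod(2))
      done
    then show "(2 * pi) powr (- real m / 2) * integral\<^sup>L (lebesgue_m m)
         (\<lambda>x. \<Sum>S\<in>Pow (set L). \<Sum>T\<in>Pow (set R). (\<Prod>k\<in>{1..m}. hh j u (S \<union> T) k (x k)) * M S T C)
       = (\<Sum>S\<in>Pow (set L). \<Sum>T\<in>Pow (set R).
       ((2 * pi) powr (- real m / 2) * (\<Prod>k\<in>{1..m}. integral\<^sup>L lborel (hh j u (S \<union> T) k))) * M S T C)"
      by (simp add: sum_distrib_left mult.assoc)
  qed
  also have "\<dots> = (\<lambda>C. \<Sum>S\<in>Pow (set L). \<Sum>T\<in>Pow (set R).
        (WW \<alpha>' \<beta>' (set L) S * hermite_multi m j u * WW \<alpha>' \<beta>' (set R) T) * M S T C)"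
  proof (intro ext sum.cong refl)
    fix C S T assume S: "S \<in> Pow (set L)" and T: "T \<in> Pow (set R)"
    have "WW \<alpha>' \<beta>' (set L) S * hermite_multi m j u * WW \<alpha>' \<beta>' (set R) T
        = (WW \<alpha>' \<beta>' (set L) S * WW \<alpha>' \<beta>' (set R) T) * hermite_multi m j u" by (simp add: mult_ac)
    also have "\<dots> = (\<Prod>k\<in>{1..m}. if k \<in> S \<union> T then \<beta>' k else \<alpha>' k) * hermite_multi m j u"
      using S T DJ by (subst prod_split) (auto simp: UN)
    also have "\<dots> = (2 * pi) powr (- real m / 2) * (\<Prod>k\<in>{1..m}. integral\<^sup>L lborel (hh j u (S \<union> T) k))"
      unfolding val \<alpha>'_def \<beta>'_def ..
    finally show "(2 * pi) powr (- real m / 2) * (\<Prod>k\<in>{1..m}. integral\<^sup>L lborel (hh j u (S \<union> T) k)) * M S T C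
       = WW \<alpha>' \<beta>' (set L) S * hermite_multi m j u * WW \<alpha>' \<beta>' (set R) T * M S T C" by simp
  qed
  also have "\<dots> = clmul m (cl_prod m (\<lambda>k. cl_pow m (cl_neg (i k)) (j k)) [1..<\<mu>+1])
      (clmul m (cl_scalar (hermite_multi m j u))
        (cl_prod m (\<lambda>k. cl_pow m (cl_neg (i k)) (j k)) [\<mu>+1..<m+1]))"
    using RHS unfolding L_def R_def by simp
  finally show ?thesis .
qed

end
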